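(* Assume that every $3$-uniform hypergraph on $8$ vertices not containing a Fano plane has at most $48$ edges, and that the only such hypergraph with exactly $48$ edges (up to isomorphism) is $B_8$. Now let $n\ge 9$ be odd and let $H$ be a $3$-uniform hypergraph on $n$ vertices with $b(n)$ edges which does not contain a Fano plane. Suppose that whenever a four-element set $K\subseteq V(H)$ induces a tetrahedron in $H$ (i) we have $H\setminus K\cong B_{n-4}$, and (ii) every vertex $v\in V(H)\setminus K$ has degree exactly $5$ in $K$. Then $H$ is isomorphic to $B_n$.
   Context: "Containing" means having a (not necessarily induced) subhypergraph isomorphic to it. The Fano plane is the hypergraph on vertex set $\{1,\dots,7\}$ with edges $123,345,156,147,367,257,246$. For $m\ge1$, $B_m$ is the $3$-uniform hypergraph on $m$ vertices with a partition $V=X\cup Y$ into disjoint sets with $||X|-|Y||\le 1$ whose edges are exactly the triples meeting both $X$ and $Y$, and $b(m)=\frac{m-2}{2}\lfloor m^2/4\rfloor$ is its number of edges. A set $K$ of four vertices induces a tetrahedron if all four triples in $K$ are edges. $H\setminus K$ is the subhypergraph induced on $V(H)\setminus K$. The degree of $v$ in $K$ is the number of pairs $\{a,b\}\subseteq K$ with $\{v,a,b\}$ an edge of $H$. *)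

theory Defs
  imports Complex_Main
begin

definition hypergraph3 :: "'a set \<Rightarrow> 'a set set \<Rightarrow> bool" where
  "hypergraph3 V E \<longleftrightarrow> finite V \<and> (\<forall>e\<in>E. e \<subseteq> V \<and> card e = 3)"

definition fano_edges :: "nat set set" where
  "fano_edges = {{1,2,3},{3,4,5},{1,5,6},{1,4,7},{3,6,7},{2,5,7},{2,4,6}}"

definition contains_fano :: "'a set \<Rightarrow> 'a set set \<Rightarrow> bool" where
  "contains_fano V E \<longleftrightarrow>
     (\<exists>f :: nat \<Rightarrow> 'a. inj_on f {1..7} \<and> f ` {1..7} \<subseteq> V \<and> (\<forall>e\<in>fano_edges. f ` e \<in> E))"

definition hg_iso :: "'a set \<Rightarrow> 'a set set \<Rightarrow> 'b set \<Rightarrow> 'b set set \<Rightarrow> bool" where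
  "hg_iso V E W F \<longleftrightarrow>
     (\<exists>f. bij_betw f V W \<and> (\<forall>e. e \<subseteq> V \<longrightarrow> (f ` e \<in> F \<longleftrightarrow> e \<in> E)))"

definition B_V :: "nat \<Rightarrow> nat set" where
  "B_V m = {0..<m}"

definition B_E :: "nat \<Rightarrow> nat set set" where
  "B_E m = {e. e \<subseteq> {0..<m} \<and> card e = 3 \<and>
                e \<inter> {0..<m div 2} \<noteq> {} \<and> e \<inter> {m div 2..<m} \<noteq> {}}"

definition b :: "nat \<Rightarrow> real" where
  "b m = (real m - 2) / 2 * real (m^2 div 4)"

definition induces_tetrahedron :: "'a set \<Rightarrow> 'a set set \<Rightarrow> 'a set \<Rightarrow> bool" where
  "induces_tetrahedron V E K \<longleftrightarrow>
     K \<subseteq> V \<and> card K = 4 \<and> (\<forall>T. T \<subseteq> K \<and> card T = 3 \<longrightarrow> T \<in> E)"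

definition induced_edges :: "'a set set \<Rightarrow> 'a set \<Rightarrow> 'a set set" where
  "induced_edges E S = {e \<in> E. e \<subseteq> S}"

definition deg_in :: "'a set set \<Rightarrow> 'a \<Rightarrow> 'a set \<Rightarrow> nat" where
  "deg_in E v K = card {p. p \<subseteq> K \<and> card p = 2 \<and> insert v p \<in> E}"

end

theory Submission
  imports Defs
begin

lemma pair4:
  assumes "P \<subseteq> {t1,t2,t3,t4}" "card P = 2"
  shows "P = {t1,t2} \<or> P = {t1,t3} \<or> P = {t1,t4} \<or> P = {t2,t3} \<or> P = {t2,t4} \<or> P = {t3,t4}"
proof -
  obtain u v where P: "P = {u,v}" "u \<noteq> v" using assms(2) card_2_iff by metis
  have "u = t1 \<or> u = t2 \<or> u = t3 \<or> u = t4" "v = t1 \<or> v = t2 \<or> v = t3 \<or> v = t4" using assms(1) P by auto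
  then show ?thesis using P(2) unfolding P(1) 
    apply (elim disjE) 
    by (simp_all add: insert_commute)
qed

lemma tri4:
  assumes "T \<subseteq> {t1,t2,t3,t4}" "card T = 3" "distinct [t1,t2,t3,t4]"
  shows "T = {t2,t3,t4} \<or> T = {t1,t3,t4} \<or> T = {t1,t2,t4} \<or> T = {t1,t2,t3}"
proof -
  have f: "finite {t1,t2,t3,t4}" by simp
  have c4: "card {t1,t2,t3,t4} = 4" using assms(3) by simp
  have "card ({t1,t2,t3,t4} - T) = 1" using card_Diff_subset[OF finite_subset[OF assms(1) f] assms(1)] c4 assms(2) by simp
  then obtain z where z: "{t1,t2,t3,t4} - T = {z}" by (meson card_1_singletonE)
  then have T: "T = {t1,t2,t3,t4} - {z}" using assms(1) by auto
  have "z \<in> {t1,t2,t3,t4}" using z by auto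
  then show ?thesis using T assms(3) by (auto simp: insert_Diff_if)
qed

lemma tet4:
  assumes "t1 \<in> V" "t2 \<in> V" "t3 \<in> V" "t4 \<in> V" "distinct [t1,t2,t3,t4]"
    "{t1,t2,t3} \<in> E" "{t1,t2,t4} \<in> E" "{t1,t3,t4} \<in> E" "{t2,t3,t4} \<in> E"
  shows "induces_tetrahedron V E {t1,t2,t3,t4}"
  unfolding induces_tetrahedron_def
  using assms tri4[of _ t1 t2 t3 t4] by auto

lemma deg_all2:
  assumes "card T = 4"
  shows "card {p. p \<subseteq> T \<and> card p = 2} = 6"
proof -
  have "finite T" using assms card.infinite by fastforce
  then show ?thesis using n_subsets[of T 2] assms by (simp add: numeral_eq_Suc)
qed

lemma deg5_am:
  assumes c: "card T = 4" and d: "deg_in E v T = 5"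
    and P: "P \<subseteq> T" "card P = 2" "insert v P \<notin> E"
    and Q: "Q \<subseteq> T" "card Q = 2" "insert v Q \<notin> E"
  shows "P = Q"
proof (rule ccontr)
  assume ne: "P \<noteq> Q"
  let ?A = "{p. p \<subseteq> T \<and> card p = 2}"
  have finT: "finite T" using c card.infinite by fastforce
  have finA: "finite ?A" using finT by simp
  have "{p. p \<subseteq> T \<and> card p = 2 \<and> insert v p \<in> E} \<subseteq> ?A - {P,Q}" using P Q by auto
  then have "card {p. p \<subseteq> T \<and> card p = 2 \<and> insert v p \<in> E} \<le> card (?A - {P,Q})"
    using finA by (intro card_mono) auto
  also have "\<dots> = 4" using deg_all2[OF c] P Q ne finA by (simp add: card_Diff_subset)
  finally show False using d unfolding deg_in_def by simp
qed

lemma deg5_al: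
  assumes c: "card T = 4" and d: "deg_in E v T = 5"
  shows "\<exists>P. P \<subseteq> T \<and> card P = 2 \<and> insert v P \<notin> E"
proof (rule ccontr)
  assume "\<not> ?thesis"
  then have "{p. p \<subseteq> T \<and> card p = 2 \<and> insert v p \<in> E} = {p. p \<subseteq> T \<and> card p = 2}" by auto
  then show False using d deg_all2[OF c] unfolding deg_in_def by simp
qed


lemma card_supsets:
  assumes fin: "finite V" and T: "T \<subseteq> V" "card T = 3"
  shows "card {Q. Q \<subseteq> V \<and> card Q = 4 \<and> T \<subseteq> Q} = card V - 3"
proof -
  have finT: "finite T" using fin T finite_subset by blast
  have "bij_betw (\<lambda>v. insert v T) (V - T) {Q. Q \<subseteq> V \<and> card Q = 4 \<and> T \<subseteq> Q}"
  proof (rule bij_betwI')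
    fix x y assume "x \<in> V - T" "y \<in> V - T"
    then show "(insert x T = insert y T) = (x = y)" by (metis Diff_iff insertE insertI1)
  next
    fix x assume "x \<in> V - T"
    then show "insert x T \<in> {Q. Q \<subseteq> V \<and> card Q = 4 \<and> T \<subseteq> Q}"
      using T finT by auto
  next
    fix Q assume Q: "Q \<in> {Q. Q \<subseteq> V \<and> card Q = 4 \<and> T \<subseteq> Q}"
    have fQ: "finite Q" using Q fin finite_subset by blast
    have "card (Q - T) = 1" using Q T card_Diff_subset[OF finT] by auto
    then obtain v where v: "Q - T = {v}" by (meson card_1_singletonE)
    then have "Q = insert v T" using Q by auto
    moreover have "v \<in> V - T" using v Q by auto
    ultimately show "\<exists>x\<in>V - T. Q = insert x T" by blast
  qed
  then have "card {Q. Q \<subseteq> V \<and> card Q = 4 \<and> T \<subseteq> Q} = card (V - T)"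
    by (metis bij_betw_same_card)
  also have "\<dots> = card V - 3" using T finT by (simp add: card_Diff_subset)
  finally show ?thesis .
qed

lemma count_tet:
  assumes H: "hypergraph3 V E" and cV: "card V = n" and n4: "n \<ge> 4"
    and notet: "\<And>K. \<not> induces_tetrahedron V E K"
  shows "4 * card E \<le> 3 * (n choose 3)"
proof -
  have fin: "finite V" using H unfolding hypergraph3_def by auto
  define Q4 where "Q4 = {Q. Q \<subseteq> V \<and> card Q = 4}"
  define T3 where "T3 = {T. T \<subseteq> V \<and> card T = 3}"
  define N where "N = T3 - E"
  have ET: "E \<subseteq> T3" using H unfolding hypergraph3_def T3_def by auto
  have finT3: "finite T3" unfolding T3_def using fin by auto
  have cT3: "card T3 = n choose 3" unfolding T3_def using n_subsets[OF fin] cV by simp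
  have cQ4: "card Q4 = n choose 4" unfolding Q4_def using n_subsets[OF fin] cV by simp
  have cN: "card N = (n choose 3) - card E" unfolding N_def
    using card_Diff_subset[OF finite_subset[OF ET finT3] ET] cT3 by simp
  have finN: "finite N" unfolding N_def using finT3 by simp
  have ex: "\<exists>T. T \<in> N \<and> T \<subseteq> Q" if "Q \<in> Q4" for Q
  proof -
    have "\<not> induces_tetrahedron V E Q" by (rule notet)
    moreover have "Q \<subseteq> V" "card Q = 4" using that unfolding Q4_def by auto
    ultimately obtain T where "T \<subseteq> Q" "card T = 3" "T \<notin> E"
      unfolding induces_tetrahedron_def by blast
    then show ?thesis using that unfolding N_def T3_def Q4_def by auto
  qed
  define S where "S = (SIGMA T:N. {Q. Q \<subseteq> V \<and> card Q = 4 \<and> T \<subseteq> Q})"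
  have finS: "finite S" unfolding S_def using finN fin by (auto intro!: finite_SigmaI)
  have "inj_on (\<lambda>Q. (SOME T. T \<in> N \<and> T \<subseteq> Q, Q)) Q4" by (rule inj_onI) auto
  moreover have "(\<lambda>Q. (SOME T. T \<in> N \<and> T \<subseteq> Q, Q)) ` Q4 \<subseteq> S"
  proof
    fix z assume "z \<in> (\<lambda>Q. (SOME T. T \<in> N \<and> T \<subseteq> Q, Q)) ` Q4"
    then obtain Q where Q: "Q \<in> Q4" and z: "z = (SOME T. T \<in> N \<and> T \<subseteq> Q, Q)" by auto
    have "(SOME T. T \<in> N \<and> T \<subseteq> Q) \<in> N \<and> (SOME T. T \<in> N \<and> T \<subseteq> Q) \<subseteq> Q"
      using someI_ex[OF ex[OF Q]] .
    then show "z \<in> S" using z Q unfolding S_def Q4_def by auto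
  qed
  ultimately have "card Q4 \<le> card S" using card_inj_on_le finS by blast
  also have "card S = (\<Sum>T\<in>N. card {Q. Q \<subseteq> V \<and> card Q = 4 \<and> T \<subseteq> Q})"
    unfolding S_def using finN fin by (subst card_SigmaI) auto
  also have "\<dots> = (\<Sum>T\<in>N. n - 3)"
    by (rule sum.cong) (use card_supsets[OF fin] cV in \<open>auto simp: N_def T3_def\<close>)
  also have "\<dots> = card N * (n - 3)" by simp
  finally have A: "(n choose 4) \<le> ((n choose 3) - card E) * (n - 3)" using cQ4 cN by simp
  have B: "4 * (n choose 4) = (n - 3) * (n choose 3)"
    using times_binomial_minus1_eq[of 4 n] binomial_absorb_comp[of n 3] by simp
  have CE: "card E \<le> n choose 3" using card_mono[OF finT3 ET] cT3 by simp
  from A have "4 * (n choose 4) \<le> 4 * (((n choose 3) - card E) * (n - 3))" by simp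
  then have "(n - 3) * (n choose 3) \<le> (n - 3) * (4 * ((n choose 3) - card E))" using B
    by (simp add: algebra_simps)
  then have "n choose 3 \<le> 4 * ((n choose 3) - card E)" using n4 by simp
  then show ?thesis using CE by linarith
qed


locale setting =
  fixes V :: "'a set" and E :: "'a set set" and K X Y :: "'a set" and x1 x2 y1 y2 y3 :: 'a
  assumes H: "hypergraph3 V E"
  and Ktet: "induces_tetrahedron V E K"
  and XY: "X \<union> Y = V - K" "X \<inter> Y = {}"
  and F2: "\<And>u v w. u \<in> V - K \<Longrightarrow> v \<in> V - K \<Longrightarrow> w \<in> V - K \<Longrightarrow> u \<noteq> v \<Longrightarrow> u \<noteq> w \<Longrightarrow> v \<noteq> w \<Longrightarrow>
         ({u,v,w} \<in> E \<longleftrightarrow> \<not>(u \<in> X \<and> v \<in> X \<and> w \<in> X) \<and> \<not>(u \<in> Y \<and> v \<in> Y \<and> w \<in> Y))"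
  and TET: "\<And>T v. induces_tetrahedron V E T \<Longrightarrow> v \<in> V - T \<Longrightarrow> deg_in E v T = 5"
  and pts: "x1 \<in> X" "x2 \<in> X" "x1 \<noteq> x2" "y1 \<in> Y" "y2 \<in> Y" "y3 \<in> Y" "y1 \<noteq> y2" "y1 \<noteq> y3" "y2 \<noteq> y3"
begin

lemma XV: "x \<in> X \<Longrightarrow> x \<in> V" and XK: "x \<in> X \<Longrightarrow> x \<notin> K"
  and YV: "y \<in> Y \<Longrightarrow> y \<in> V" and YK: "y \<in> Y \<Longrightarrow> y \<notin> K"
  and XnY: "x \<in> X \<Longrightarrow> x \<notin> Y"
  using XY by auto

lemma KV: "K \<subseteq> V" and cardK: "card K = 4"
  using Ktet unfolding induces_tetrahedron_def by auto

lemma Ktri: "c1 \<in> K \<Longrightarrow> c2 \<in> K \<Longrightarrow> c3 \<in> K \<Longrightarrow> c1 \<noteq> c2 \<Longrightarrow> c1 \<noteq> c3 \<Longrightarrow> c2 \<noteq> c3 \<Longrightarrow> {c1,c2,c3} \<in> E"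
  using Ktet unfolding induces_tetrahedron_def by (auto simp: card_insert_if)

lemma AM:
  assumes "induces_tetrahedron V E T" "v \<in> V - T" "P \<subseteq> T" "card P = 2" "Q \<subseteq> T" "card Q = 2"
    "insert v P \<notin> E" "insert v Q \<notin> E"
  shows "P = Q"
  using deg5_am[of T E v P Q] TET[OF assms(1,2)] assms unfolding induces_tetrahedron_def by blast

lemma am2:
  assumes "induces_tetrahedron V E T" "v \<in> V - T" "u1 \<in> T" "u2 \<in> T" "w1 \<in> T" "w2 \<in> T"
    "u1 \<noteq> u2" "w1 \<noteq> w2" "{u1,u2} \<noteq> {w1,w2}" "{v,u1,u2} \<notin> E" "{v,w1,w2} \<notin> E"
  shows False
  using AM[OF assms(1,2), of "{u1,u2}" "{w1,w2}"] assms by auto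

lemma al4:
  assumes "induces_tetrahedron V E {t1,t2,t3,t4}" "v \<in> V - {t1,t2,t3,t4}"
  shows "{v,t1,t2} \<notin> E \<or> {v,t1,t3} \<notin> E \<or> {v,t1,t4} \<notin> E \<or> {v,t2,t3} \<notin> E \<or> {v,t2,t4} \<notin> E \<or> {v,t3,t4} \<notin> E"
proof -
  obtain P where P: "P \<subseteq> {t1,t2,t3,t4}" "card P = 2" "insert v P \<notin> E"
    using deg5_al[of "{t1,t2,t3,t4}" E v] TET[OF assms] assms(1) unfolding induces_tetrahedron_def by blast
  show ?thesis using pair4[OF P(1,2)] P(3) by auto
qed

lemma cross0:
  assumes a: "a \<in> K" and xs: "xa \<in> X" "xb \<in> X" "xa \<noteq> xb"
    and ys: "ya \<in> Y" "yb \<in> Y" "yc \<in> Y" "ya \<noteq> yb" "ya \<noteq> yc" "yb \<noteq> yc"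
  shows "{a,xa,ya} \<in> E"
proof (rule ccontr)
  assume m: "{a,xa,ya} \<notin> E"
  have d: "xa \<noteq> ya" "xa \<noteq> yb" "xa \<noteq> yc" "xb \<noteq> ya" "xb \<noteq> yb" "xb \<noteq> yc"
    using xs ys XnY by metis+
  have aV: "a \<in> V" using a KV by auto
  have nK: "a \<noteq> xa" "a \<noteq> xb" "a \<noteq> ya" "a \<noteq> yb" "a \<noteq> yc" using a xs ys XK YK by metis+
  have vs: "xa \<in> V - K" "xb \<in> V - K" "ya \<in> V - K" "yb \<in> V - K" "yc \<in> V - K" using xs ys XY by auto
  have nx: "ya \<notin> X" "yb \<notin> X" "yc \<notin> X" "xa \<notin> Y" "xb \<notin> Y" using xs ys XY by auto
  have e: "{xa,xb,ya} \<in> E" "{xa,xb,yb} \<in> E" "{xa,xb,yc} \<in> E" "{xa,ya,yb} \<in> E" "{xb,ya,yb} \<in> E"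
     "{xa,ya,yc} \<in> E" "{xb,ya,yc} \<in> E" "{xa,yb,yc} \<in> E" "{xb,yb,yc} \<in> E"
    using F2 vs xs ys d nx by simp_all
  have nyyy: "{yc,ya,yb} \<notin> E" using F2 vs ys by simp
  have L1: "induces_tetrahedron V E {xa,xb,ya,yb}"
    by (rule tet4) (use vs d xs ys e in auto)
  have L2: "induces_tetrahedron V E {xa,xb,ya,yc}"
    by (rule tet4) (use vs d xs ys e in auto)
  have L3: "induces_tetrahedron V E {xa,xb,yb,yc}"
    by (rule tet4) (use vs d xs ys e in auto)
  have aL1: "a \<in> V - {xa,xb,ya,yb}" and aL2: "a \<in> V - {xa,xb,ya,yc}" and aL3: "a \<in> V - {xa,xb,yb,yc}"
    using aV nK by auto
  have f1: "{a,xb,ya} \<in> E" "{a,xb,yb} \<in> E" "{a,ya,yb} \<in> E" "{a,xa,xb} \<in> E" "{a,xa,yb} \<in> E"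
    using am2[OF L1 aL1, of xa ya] m d xs ys nK by (auto simp: doubleton_eq_iff)
  have f2: "{a,xb,yc} \<in> E" "{a,xa,yc} \<in> E"
    using am2[OF L2 aL2, of xa ya] m d xs ys nK by (auto simp: doubleton_eq_iff)
  have "{a,yb,yc} \<notin> E" using al4[OF L3 aL3] f1 f2 by auto
  have T: "induces_tetrahedron V E {a,xb,ya,yb}"
    by (rule tet4) (use aV vs d nK f1 e ys in auto)
  have "yc \<in> V - {a,xb,ya,yb}" using vs nK d ys by auto
  moreover have "{yc,a,yb} \<notin> E" using \<open>{a,yb,yc} \<notin> E\<close>
    by (metis insert_commute)
  moreover have "{ya,yb} \<noteq> {a,yb}" using nK ys by (auto simp: doubleton_eq_iff)
  ultimately show False using am2[OF T, of yc ya yb a yb] nyyy ys nK by auto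
qed

lemma other_x: "x \<in> X \<Longrightarrow> \<exists>x'. x' \<in> X \<and> x' \<noteq> x"
  using pts by metis

lemma other_y: "y \<in> Y \<Longrightarrow> \<exists>y' y''. y' \<in> Y \<and> y'' \<in> Y \<and> y' \<noteq> y'' \<and> y' \<noteq> y \<and> y'' \<noteq> y"
  using pts by metis

lemma cross: assumes "a \<in> K" "x \<in> X" "y \<in> Y" shows "{a,x,y} \<in> E"
proof -
  obtain x' where "x' \<in> X" "x' \<noteq> x" using other_x assms by blast
  moreover obtain y' y'' where "y' \<in> Y" "y'' \<in> Y" "y' \<noteq> y''" "y' \<noteq> y" "y'' \<noteq> y" using other_y assms by blast
  ultimately show ?thesis using cross0[of a x x' y y' y''] assms by auto
qed

lemma cross': assumes "a \<in> K" "x \<in> X" "y \<in> Y" shows "{a,y,x} \<in> E" "{x,a,y} \<in> E" "{y,a,x} \<in> E"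
   "{x,y,a} \<in> E" "{y,x,a} \<in> E"
  using cross[OF assms] by (simp_all add: insert_commute)

lemma dich0:
  assumes a: "a \<in> K" and xs: "xa \<in> X" "xb \<in> X" "xa \<noteq> xb" and ys: "ya \<in> Y" "yb \<in> Y" "ya \<noteq> yb"
  shows "{a,xa,xb} \<in> E \<longleftrightarrow> {a,ya,yb} \<notin> E"
proof -
  have d: "xa \<noteq> ya" "xa \<noteq> yb" "xb \<noteq> ya" "xb \<noteq> yb"
    using xs ys XnY by metis+
  have aV: "a \<in> V" using a KV by auto
  have nK: "a \<noteq> xa" "a \<noteq> xb" "a \<noteq> ya" "a \<noteq> yb" using a xs ys XK YK by metis+
  have vs: "xa \<in> V - K" "xb \<in> V - K" "ya \<in> V - K" "yb \<in> V - K" using xs ys XY by auto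
  have nx: "ya \<notin> X" "yb \<notin> X" "xa \<notin> Y" "xb \<notin> Y" using xs ys XY by auto
  have e: "{xa,xb,ya} \<in> E" "{xa,xb,yb} \<in> E" "{xa,ya,yb} \<in> E" "{xb,ya,yb} \<in> E"
    using F2 vs xs ys d nx by simp_all
  have L: "induces_tetrahedron V E {xa,xb,ya,yb}"
    by (rule tet4) (use vs d xs ys e in auto)
  have aL: "a \<in> V - {xa,xb,ya,yb}" using aV nK by auto
  have c: "{a,xa,ya} \<in> E" "{a,xa,yb} \<in> E" "{a,xb,ya} \<in> E" "{a,xb,yb} \<in> E"
    using cross a xs ys by auto
  have "{a,xa,xb} \<notin> E \<or> {a,ya,yb} \<notin> E" using al4[OF L aL] c by auto
  moreover have "\<not> ({a,xa,xb} \<notin> E \<and> {a,ya,yb} \<notin> E)"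
    using am2[OF L aL, of xa xb ya yb] xs ys d by (auto simp: doubleton_eq_iff)
  ultimately show ?thesis by blast
qed

definition SX where "SX = {a \<in> K. {a,x1,x2} \<notin> E}"

lemma sideX:
  assumes "a \<in> SX"
  shows "\<And>xa xb. xa \<in> X \<Longrightarrow> xb \<in> X \<Longrightarrow> xa \<noteq> xb \<Longrightarrow> {a,xa,xb} \<notin> E"
    and "\<And>ya yb. ya \<in> Y \<Longrightarrow> yb \<in> Y \<Longrightarrow> ya \<noteq> yb \<Longrightarrow> {a,ya,yb} \<in> E"
proof -
  have a: "a \<in> K" "{a,x1,x2} \<notin> E" using assms SX_def by auto
  show yy: "\<And>ya yb. ya \<in> Y \<Longrightarrow> yb \<in> Y \<Longrightarrow> ya \<noteq> yb \<Longrightarrow> {a,ya,yb} \<in> E"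
    using dich0[OF a(1) pts(1,2,3)] a(2) by blast
  show "\<And>xa xb. xa \<in> X \<Longrightarrow> xb \<in> X \<Longrightarrow> xa \<noteq> xb \<Longrightarrow> {a,xa,xb} \<notin> E"
    using dich0[OF a(1) _ _ _ pts(4,5,7)] yy[OF pts(4,5,7)] by blast
qed

lemma sideY:
  assumes "a \<in> K" "a \<notin> SX"
  shows "\<And>xa xb. xa \<in> X \<Longrightarrow> xb \<in> X \<Longrightarrow> xa \<noteq> xb \<Longrightarrow> {a,xa,xb} \<in> E"
    and "\<And>ya yb. ya \<in> Y \<Longrightarrow> yb \<in> Y \<Longrightarrow> ya \<noteq> yb \<Longrightarrow> {a,ya,yb} \<notin> E"
proof -
  have a: "a \<in> K" "{a,x1,x2} \<in> E" using assms SX_def by auto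
  show yy: "\<And>ya yb. ya \<in> Y \<Longrightarrow> yb \<in> Y \<Longrightarrow> ya \<noteq> yb \<Longrightarrow> {a,ya,yb} \<notin> E"
    using dich0[OF a(1) pts(1,2,3)] a(2) by blast
  show "\<And>xa xb. xa \<in> X \<Longrightarrow> xb \<in> X \<Longrightarrow> xa \<noteq> xb \<Longrightarrow> {a,xa,xb} \<in> E"
    using dich0[OF a(1) _ _ _ pts(4,5,7)] yy[OF pts(4,5,7)] by blast
qed

definition one3 :: "bool \<Rightarrow> bool \<Rightarrow> bool \<Rightarrow> bool" where
  "one3 A B C \<longleftrightarrow> (A \<or> B \<or> C) \<and> \<not>(A \<and> B) \<and> \<not>(A \<and> C) \<and> \<not>(B \<and> C)"

lemma EX1:
  assumes c: "c \<in> K" "c' \<in> K" "c \<noteq> c'" and u: "u \<in> V - K" "w1 \<in> V - K" "w2 \<in> V - K"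
    "u \<noteq> w1" "u \<noteq> w2" "w1 \<noteq> w2"
    and e: "{c,u,w1} \<in> E" "{c,u,w2} \<in> E" "{c,w1,w2} \<in> E" "{u,w1,w2} \<in> E"
      "{c',u,w1} \<in> E" "{c',u,w2} \<in> E" "{c',w1,w2} \<in> E"
  shows "one3 ({c,c',u} \<notin> E) ({c,c',w1} \<notin> E) ({c,c',w2} \<notin> E)"
proof -
  have cV: "c \<in> V" "c' \<in> V" using c KV by auto
  have nK: "c \<noteq> u" "c \<noteq> w1" "c \<noteq> w2" "c' \<noteq> u" "c' \<noteq> w1" "c' \<noteq> w2" using c u by auto
  have T: "induces_tetrahedron V E {c,u,w1,w2}"
    by (rule tet4) (use cV u nK e in auto)
  have cT: "c' \<in> V - {c,u,w1,w2}" using cV nK c by auto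
  have r: "{c,c',u} = {c',c,u}" "{c,c',w1} = {c',c,w1}" "{c,c',w2} = {c',c,w2}"
    by (auto simp: insert_commute)
  show ?thesis unfolding one3_def r
    using al4[OF T cT] e am2[OF T cT, of c u c w1] am2[OF T cT, of c u c w2] am2[OF T cT, of c w1 c w2]
      nK u by (auto simp: doubleton_eq_iff)
qed

lemma Kam:
  assumes "v \<in> V - K" "c1 \<in> K" "c2 \<in> K" "c3 \<in> K" "c4 \<in> K" "c1 \<noteq> c2" "c3 \<noteq> c4"
    "{c1,c2} \<noteq> {c3,c4}" "{v,c1,c2} \<notin> E" "{v,c3,c4} \<notin> E"
  shows False
  using am2[OF Ktet assms(1), of c1 c2 c3 c4] assms by blast

lemma G0:
  assumes c: "c \<in> K" "c' \<in> K" "c'' \<in> K" "c \<noteq> c'" "c \<noteq> c''" "c' \<noteq> c''"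
    and u: "u \<in> V - K" "w1 \<in> V - K" "w2 \<in> V - K" "u \<noteq> w1" "u \<noteq> w2" "w1 \<noteq> w2"
    and f: "{c,c',w1} \<in> E" "{c,c',w2} \<in> E" "{c,w1,w2} \<in> E" "{c',w1,w2} \<in> E"
    and o1: "one3 ({c,c',u} \<notin> E) ({c,c',w1} \<notin> E) ({c,c',w2} \<notin> E)"
    and o2: "one3 ({c,c'',u} \<notin> E) ({c,c'',w1} \<notin> E) ({c,c'',w2} \<notin> E)"
    and o3: "one3 ({c',c'',u} \<notin> E) ({c',c'',w1} \<notin> E) ({c',c'',w2} \<notin> E)"
  shows False
proof -
  have cV: "c \<in> V" "c' \<in> V" "c'' \<in> V" using c KV by auto
  have nK: "c \<noteq> u" "c \<noteq> w1" "c \<noteq> w2" "c' \<noteq> u" "c' \<noteq> w1" "c' \<noteq> w2" "c'' \<noteq> w1" "c'' \<noteq> w2"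
    using c u by auto
  have cu: "{u,c,c'} \<notin> E" using o1 f unfolding one3_def by (auto simp: insert_commute)
  have p: "{c,c'} \<noteq> {c,c''}" "{c,c'} \<noteq> {c',c''}" "{c,c''} \<noteq> {c',c''}" using c by (auto simp: doubleton_eq_iff)
  have "{u,c,c''} \<in> E" using Kam[OF u(1) c(1,2,1,3) c(4,5) p(1) cu] by blast
  have "{u,c',c''} \<in> E" using Kam[OF u(1) c(1,2,2,3) c(4,6) p(2) cu] by blast
  have w1: "\<not> ({w1,c,c''} \<notin> E \<and> {w1,c',c''} \<notin> E)" using Kam[OF u(2) c(1,3,2,3) c(5,6) p(3)] by blast
  have w2: "\<not> ({w2,c,c''} \<notin> E \<and> {w2,c',c''} \<notin> E)" using Kam[OF u(3) c(1,3,2,3) c(5,6) p(3)] by blast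
  have T: "induces_tetrahedron V E {c,c',w1,w2}"
    by (rule tet4) (use cV u nK c f in auto)
  have cT: "c'' \<in> V - {c,c',w1,w2}" using cV nK c by auto
  have q: "{c,w1} \<noteq> {c',w2}" "{c,w2} \<noteq> {c',w1}" using c nK by (auto simp: doubleton_eq_iff)
  have "({w1,c,c''} \<notin> E \<and> {w2,c',c''} \<notin> E) \<or> ({w2,c,c''} \<notin> E \<and> {w1,c',c''} \<notin> E)"
    using o2 o3 w1 w2 \<open>{u,c,c''} \<in> E\<close> \<open>{u,c',c''} \<in> E\<close> unfolding one3_def
    by (auto simp: insert_commute)
  then show False
  proof
    assume h: "{w1,c,c''} \<notin> E \<and> {w2,c',c''} \<notin> E"
    have "{c'',c,w1} \<notin> E" "{c'',c',w2} \<notin> E" using h by (auto simp: insert_commute)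
    then show False using am2[OF T cT, of c w1 c' w2] q c nK by auto
  next
    assume h: "{w2,c,c''} \<notin> E \<and> {w1,c',c''} \<notin> E"
    have "{c'',c,w2} \<notin> E" "{c'',c',w1} \<notin> E" using h by (auto simp: insert_commute)
    then show False using am2[OF T cT, of c w2 c' w1] q c nK by auto
  qed
qed

lemma one3_perm: "one3 A B C \<Longrightarrow> one3 A C B" unfolding one3_def by blast

lemma G:
  assumes c: "c1 \<in> K" "c2 \<in> K" "c3 \<in> K" "c1 \<noteq> c2" "c1 \<noteq> c3" "c2 \<noteq> c3"
    and u: "u \<in> V - K" "w1 \<in> V - K" "w2 \<in> V - K" "u \<noteq> w1" "u \<noteq> w2" "w1 \<noteq> w2"
    and f: "{c1,w1,w2} \<in> E" "{c2,w1,w2} \<in> E" "{c3,w1,w2} \<in> E"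
    and o12: "one3 ({c1,c2,u} \<notin> E) ({c1,c2,w1} \<notin> E) ({c1,c2,w2} \<notin> E)"
    and o13: "one3 ({c1,c3,u} \<notin> E) ({c1,c3,w1} \<notin> E) ({c1,c3,w2} \<notin> E)"
    and o23: "one3 ({c2,c3,u} \<notin> E) ({c2,c3,w1} \<notin> E) ({c2,c3,w2} \<notin> E)"
  shows False
proof -
  have p: "{c1,c2} \<noteq> {c1,c3}" "{c1,c2} \<noteq> {c2,c3}" "{c1,c3} \<noteq> {c2,c3}" using c by (auto simp: doubleton_eq_iff)
  have r: "\<And>v x y. {v,x,y} = {x,y,v}" by (auto simp: insert_commute)
  have a1: "\<not> ({c1,c2,w} \<notin> E \<and> {c1,c3,w} \<notin> E)" 
   and a2: "\<not> ({c1,c2,w} \<notin> E \<and> {c2,c3,w} \<notin> E)"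
   and a3: "\<not> ({c1,c3,w} \<notin> E \<and> {c2,c3,w} \<notin> E)" if "w \<in> V - K" for w
    using Kam[OF that c(1,2,1,3) c(4,5) p(1)] Kam[OF that c(1,2,2,3) c(4,6) p(2)]
      Kam[OF that c(1,3,2,3) c(5,6) p(3)] by (auto simp: r)
  have o31: "one3 ({c1,c3,u} \<notin> E) ({c1,c3,w1} \<notin> E) ({c1,c3,w2} \<notin> E)" by (rule o13)
  have s: "{c3,c1,z} = {c1,c3,z}" "{c3,c2,z} = {c2,c3,z}" "{c2,c1,z} = {c1,c2,z}" for z by (auto simp: insert_commute)
  have fs: "{c1,w2,w1} \<in> E" "{c2,w2,w1} \<in> E" "{c3,w2,w1} \<in> E" using f by (auto simp: insert_commute)
  show False
  proof (cases "{c1,c2,w1} \<in> E \<and> {c1,c2,w2} \<in> E")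
    case True
    then show False using G0[OF c(1,2,3) c(4,5,6) u _ _ f(1,2) o12 o13 o23] True by blast
  next
    case n12: False
    show False
    proof (cases "{c1,c3,w1} \<in> E \<and> {c1,c3,w2} \<in> E")
      case True
      then show False using G0[OF c(1,3,2) c(5,4) c(6)[symmetric] u _ _ f(1,3) o13 o12] o23 True
        unfolding one3_def s by (auto simp: insert_commute)
    next
      case n13: False
      show False
      proof (cases "{c2,c3,w1} \<in> E \<and> {c2,c3,w2} \<in> E")
        case True
        then show False using G0[OF c(2,3,1) c(6) c(4)[symmetric] c(5)[symmetric] u _ _ f(2,3) o23] o12 o13 True
          unfolding one3_def s by (auto simp: insert_commute)
      next
        case n23: False
        show False using n12 n13 n23 a1[OF u(2)] a2[OF u(2)] a3[OF u(2)] a1[OF u(3)] a2[OF u(3)] a3[OF u(3)]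
          by blast
      qed
    qed
  qed
qed

lemma F2XY:
  assumes "x \<in> X" "y \<in> Y" "y' \<in> Y" "y \<noteq> y'"
  shows "{x,y,y'} \<in> E" "{y,x,y'} \<in> E"
proof -
  have "x \<noteq> y" "x \<noteq> y'" using assms XnY by metis+
  moreover have "x \<notin> Y" "y \<notin> X" "y' \<notin> X" using assms XY by auto
  ultimately show "{x,y,y'} \<in> E" "{y,x,y'} \<in> E" using F2[of x y y'] F2[of y x y'] assms XY by auto
qed

lemma F2YX:
  assumes "y \<in> Y" "x \<in> X" "x' \<in> X" "x \<noteq> x'"
  shows "{y,x,x'} \<in> E"
proof -
  have "y \<noteq> x" "y \<noteq> x'" using assms XnY by metis+
  moreover have "y \<notin> X" "x \<notin> Y" "x' \<notin> Y" using assms XY by auto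
  ultimately show "{y,x,x'} \<in> E" using F2[of y x x'] assms XY by auto
qed

lemma XVK: "x \<in> X \<Longrightarrow> x \<in> V - K" and YVK: "y \<in> Y \<Longrightarrow> y \<in> V - K" using XY by auto

lemma XYne: "x \<in> X \<Longrightarrow> y \<in> Y \<Longrightarrow> x \<noteq> y" using XnY by metis

lemma SXK: "SX \<subseteq> K" unfolding SX_def by auto

lemma noX3:
  assumes "c1 \<in> SX" "c2 \<in> SX" "c3 \<in> SX" "c1 \<noteq> c2" "c1 \<noteq> c3" "c2 \<noteq> c3"
  shows False
proof -
  have cK: "c1 \<in> K" "c2 \<in> K" "c3 \<in> K" using assms SXK by auto
  have u: "x1 \<in> V - K" "y1 \<in> V - K" "y2 \<in> V - K" "x1 \<noteq> y1" "x1 \<noteq> y2" "y1 \<noteq> y2"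
    using pts XVK YVK XYne by auto
  have f: "{c,y1,y2} \<in> E" if "c \<in> SX" for c using sideX(2)[OF that] pts by auto
  have o: "one3 ({c,c',x1} \<notin> E) ({c,c',y1} \<notin> E) ({c,c',y2} \<notin> E)"
    if "c \<in> SX" "c' \<in> SX" "c \<noteq> c'" for c c'
    using EX1[of c c' x1 y1 y2] that SXK u cross pts f F2XY by auto
  show False using G[OF cK assms(4-6) u f[OF assms(1)] f[OF assms(2)] f[OF assms(3)]] o assms by auto
qed

lemma noY3:
  assumes "c1 \<in> K - SX" "c2 \<in> K - SX" "c3 \<in> K - SX" "c1 \<noteq> c2" "c1 \<noteq> c3" "c2 \<noteq> c3"
  shows False
proof -
  have cK: "c1 \<in> K" "c2 \<in> K" "c3 \<in> K" using assms by auto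
  have u: "y1 \<in> V - K" "x1 \<in> V - K" "x2 \<in> V - K" "y1 \<noteq> x1" "y1 \<noteq> x2" "x1 \<noteq> x2"
    using pts XVK YVK XYne by auto
  have f: "{c,x1,x2} \<in> E" if "c \<in> K - SX" for c using sideY(1)[of c] that pts by auto
  have o: "one3 ({c,c',y1} \<notin> E) ({c,c',x1} \<notin> E) ({c,c',x2} \<notin> E)"
    if "c \<in> K - SX" "c' \<in> K - SX" "c \<noteq> c'" for c c'
    using EX1[of c c' y1 x1 x2] that u cross' pts f F2YX by auto
  show False using G[OF cK assms(4-6) u f[OF assms(1)] f[OF assms(2)] f[OF assms(3)]] o assms by auto
qed

lemma three_of: assumes "finite A" "card A \<ge> 3" shows "\<exists>p q r. p \<in> A \<and> q \<in> A \<and> r \<in> A \<and> p \<noteq> q \<and> p \<noteq> r \<and> q \<noteq> r"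
proof -
  obtain B where "B \<subseteq> A" "card B = 3" using obtain_subset_with_card_n assms by metis
  then show ?thesis using card_3_iff[of B] by blast
qed

lemma finK: "finite K" using cardK card.infinite by fastforce

lemma cardSX: "card SX = 2" "card (K - SX) = 2"
proof -
  have f1: "finite SX" "finite (K - SX)" using finK SXK finite_subset by auto
  have "\<not> card SX \<ge> 3" using three_of[OF f1(1)] noX3 by blast
  moreover have "\<not> card (K - SX) \<ge> 3" using three_of[OF f1(2)] noY3 by blast
  moreover have "card SX + card (K - SX) = 4" using card_Diff_subset[OF f1(1) SXK] cardK card_mono[OF finK SXK] by simp
  ultimately show "card SX = 2" "card (K - SX) = 2" by auto
qed

lemma XYa0:
  assumes a: "a \<in> SX" and bb: "bb \<in> K" "bb \<notin> SX" and x: "x \<in> X" and y: "y \<in> Y" "y' \<in> Y" "y \<noteq> y'"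
  shows "{a,bb,x} \<in> E" "{a,bb,y} \<in> E"
proof -
  have aK: "a \<in> K" using a SXK by auto
  have aV: "a \<in> V" "bb \<in> V" using aK bb KV by auto
  have ab: "a \<noteq> bb" using a bb by auto
  have nK: "a \<noteq> x" "a \<noteq> y" "a \<noteq> y'" "bb \<noteq> x" "bb \<noteq> y" "bb \<noteq> y'" using aK bb x y XK YK by metis+
  have xy: "x \<noteq> y" "x \<noteq> y'" using x y XYne by auto
  have T: "induces_tetrahedron V E {a,x,y,y'}"
    by (rule tet4) (use aV x y nK xy XV YV cross[OF aK x] sideX(2)[OF a y] F2XY[OF x y] in auto)
  have bT: "bb \<in> V - {a,x,y,y'}" using aV nK ab by auto
  have m: "{bb,y,y'} \<notin> E" using sideY(2)[OF bb y] .
  have "{bb,a,x} \<in> E" using am2[OF T bT, of a x y y'] m nK xy y by (auto simp: doubleton_eq_iff)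
  moreover have "{bb,a,y} \<in> E" using am2[OF T bT, of a y y y'] m nK xy y by (auto simp: doubleton_eq_iff)
  ultimately show "{a,bb,x} \<in> E" "{a,bb,y} \<in> E" by (auto simp: insert_commute)
qed

lemma XYa:
  assumes a: "a \<in> SX" and bb: "bb \<in> K" "bb \<notin> SX" and v: "v \<in> V - K"
  shows "{a,bb,v} \<in> E"
proof (cases "v \<in> X")
  case True
  then show ?thesis using XYa0(1)[OF a bb True pts(4,5,7)] by auto
next
  case False
  then have "v \<in> Y" using v XY by auto
  then obtain y' where "y' \<in> Y" "v \<noteq> y'" using other_y by metis
  then show ?thesis using XYa0(2)[OF a bb pts(1) \<open>v \<in> Y\<close>] by auto
qed

end

locale setting2 = setting +
  fixes a1 a2 c1 c2
  assumes SXe: "SX = {a1,a2}" "a1 \<noteq> a2" "K - SX = {c1,c2}" "c1 \<noteq> c2"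
begin

lemma Keq: "K = {a1,a2,c1,c2}" using SXe SXK by auto

lemma Kdist: "distinct [a1,a2,c1,c2]" using SXe by auto

lemma exone:
  assumes v: "v \<in> V - K"
  shows "({a1,a2,v} \<notin> E) \<longleftrightarrow> ({c1,c2,v} \<in> E)"
proof -
  have aS: "a1 \<in> SX" "a2 \<in> SX" and cK: "c1 \<in> K" "c2 \<in> K" "c1 \<notin> SX" "c2 \<notin> SX" using SXe by auto
  have e: "{v,a1,c1} \<in> E" "{v,a1,c2} \<in> E" "{v,a2,c1} \<in> E" "{v,a2,c2} \<in> E"
    using XYa[OF aS(1) cK(1,3) v] XYa[OF aS(1) cK(2,4) v] XYa[OF aS(2) cK(1,3) v] XYa[OF aS(2) cK(2,4) v]
    by (auto simp: insert_commute)
  have vK: "v \<in> V - {a1,a2,c1,c2}" using v Keq by auto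
  have "{v,a1,a2} \<notin> E \<or> {v,c1,c2} \<notin> E" using al4[OF Ktet[unfolded Keq] vK] e by auto
  moreover have "\<not> ({v,a1,a2} \<notin> E \<and> {v,c1,c2} \<notin> E)"
    using Kam[OF v, of a1 a2 c1 c2] SXe Keq Kdist by (auto simp: doubleton_eq_iff)
  ultimately show ?thesis by (auto simp: insert_commute)
qed

lemma oneXX:
  assumes x: "x \<in> X" and y: "y \<in> Y" "y' \<in> Y" "y \<noteq> y'"
  shows "one3 ({a1,a2,x} \<notin> E) ({a1,a2,y} \<notin> E) ({a1,a2,y'} \<notin> E)"
proof -
  have aS: "a1 \<in> SX" "a2 \<in> SX" using SXe by auto
  have aK: "a1 \<in> K" "a2 \<in> K" using aS SXK by auto
  show ?thesis
    by (rule EX1) (use aK SXe XVK YVK x y XYne cross[OF aK(1) x] cross[OF aK(2) x]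
      sideX(2)[OF aS(1) y] sideX(2)[OF aS(2) y] F2XY[OF x y] in auto)
qed

lemma NX: assumes x: "x \<in> X" shows "{a1,a2,x} \<notin> E"
proof
  assume h: "{a1,a2,x} \<in> E"
  show False using oneXX[OF x pts(4,5,7)] oneXX[OF x pts(4,6,8)] oneXX[OF x pts(5,6,9)] h
    unfolding one3_def by blast
qed

lemma NY: assumes y: "y \<in> Y" shows "{a1,a2,y} \<in> E"
proof -
  obtain y' where "y' \<in> Y" "y \<noteq> y'" using other_y y by metis
  then show ?thesis using oneXX[OF pts(1) y] NX[OF pts(1)] unfolding one3_def by blast
qed

definition XS where "XS = X \<union> SX"

definition Qc where "Qc u v w \<longleftrightarrow> ({u,v,w} \<in> E \<longleftrightarrow> \<not>(u \<in> XS \<and> v \<in> XS \<and> w \<in> XS) \<and> \<not>(u \<notin> XS \<and> v \<notin> XS \<and> w \<notin> XS))"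

lemma Qc_perm: "Qc u v w \<Longrightarrow> Qc v u w" "Qc u v w \<Longrightarrow> Qc u w v"
  unfolding Qc_def by (auto simp: insert_commute)

lemma XSK: "k \<in> K \<Longrightarrow> k \<in> XS \<longleftrightarrow> k \<in> SX" unfolding XS_def using XK by auto
lemma XSV: "v \<in> V - K \<Longrightarrow> v \<in> XS \<longleftrightarrow> v \<in> X" "v \<in> V - K \<Longrightarrow> v \<notin> XS \<longleftrightarrow> v \<in> Y"
  unfolding XS_def using XY SXK by auto

lemma ch0: "u \<in> V - K \<Longrightarrow> v \<in> V - K \<Longrightarrow> w \<in> V - K \<Longrightarrow> u \<noteq> v \<Longrightarrow> u \<noteq> w \<Longrightarrow> v \<noteq> w \<Longrightarrow> Qc u v w"
  unfolding Qc_def using F2[of u v w] XSV by auto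

lemma ch1:
  assumes a: "a \<in> K" and v: "v \<in> V - K" "w \<in> V - K" "v \<noteq> w"
  shows "Qc a v w"
proof -
  have vv: "v \<in> X \<or> v \<in> Y" "w \<in> X \<or> w \<in> Y" using v XY by auto
  have xx: "v \<in> XS \<longleftrightarrow> v \<in> X" "w \<in> XS \<longleftrightarrow> w \<in> X" "v \<notin> XS \<longleftrightarrow> v \<in> Y" "w \<notin> XS \<longleftrightarrow> w \<in> Y"
    using XSV v by auto
  show ?thesis
  proof (cases "a \<in> SX")
    case True
    have aX: "a \<in> XS" using XSK[OF a] True by simp
    show ?thesis using vv
    proof (elim disjE)
      assume h: "v \<in> X" "w \<in> X"
      then have "{a,v,w} \<notin> E" using sideX(1)[OF True] v by blast
      then show ?thesis unfolding Qc_def using aX xx h by blast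
    next
      assume h: "v \<in> X" "w \<in> Y"
      then have "{a,v,w} \<in> E" using cross[OF a] by blast
      then show ?thesis unfolding Qc_def using aX xx h XnY by blast
    next
      assume h: "v \<in> Y" "w \<in> X"
      then have "{a,v,w} \<in> E" using cross'[OF a] by blast
      then show ?thesis unfolding Qc_def using aX xx h XnY by blast
    next
      assume h: "v \<in> Y" "w \<in> Y"
      then have "{a,v,w} \<in> E" using sideX(2)[OF True] v by blast
      then show ?thesis unfolding Qc_def using aX xx h XnY by blast
    qed
  next
    case False
    have aX: "a \<notin> XS" using XSK[OF a] False by simp
    show ?thesis using vv
    proof (elim disjE)
      assume h: "v \<in> X" "w \<in> X"
      then have "{a,v,w} \<in> E" using sideY(1)[OF a False] v by blast
      then show ?thesis unfolding Qc_def using aX xx h XnY by blast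
    next
      assume h: "v \<in> X" "w \<in> Y"
      then have "{a,v,w} \<in> E" using cross[OF a] by blast
      then show ?thesis unfolding Qc_def using aX xx h XnY by blast
    next
      assume h: "v \<in> Y" "w \<in> X"
      then have "{a,v,w} \<in> E" using cross'[OF a] by blast
      then show ?thesis unfolding Qc_def using aX xx h XnY by blast
    next
      assume h: "v \<in> Y" "w \<in> Y"
      then have "{a,v,w} \<notin> E" using sideY(2)[OF a False] v by blast
      then show ?thesis unfolding Qc_def using aX xx h XnY by blast
    qed
  qed
qed

lemma ch2:
  assumes c: "k \<in> K" "k' \<in> K" "k \<noteq> k'" and w: "w \<in> V - K"
  shows "Qc k k' w"
proof -
  have ww: "w \<in> X \<or> w \<in> Y" using w XY by auto
  have xx: "w \<in> XS \<longleftrightarrow> w \<in> X" "w \<notin> XS \<longleftrightarrow> w \<in> Y" using XSV w by auto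
  have eA: "{a1,a2,w} \<in> E \<longleftrightarrow> w \<in> Y" using NX NY ww XnY by blast
  have eC: "{c1,c2,w} \<in> E \<longleftrightarrow> w \<in> X" using exone[OF w] eA ww XnY by blast
  consider "k \<in> SX" "k' \<in> SX" | "k \<in> SX" "k' \<notin> SX" | "k \<notin> SX" "k' \<in> SX" | "k \<notin> SX" "k' \<notin> SX" by blast
  then show ?thesis
  proof cases
    case 1
    then have eq: "{k,k'} = {a1,a2}" using SXe c by auto
    have "{k,k',w} = insert w {k,k'}" by auto
    also have "\<dots> = insert w {a1,a2}" using eq by simp
    also have "\<dots> = {a1,a2,w}" by auto
    finally have "{k,k',w} = {a1,a2,w}" .
    then have "{k,k',w} \<in> E \<longleftrightarrow> w \<in> Y" using eA by simp
    then show ?thesis unfolding Qc_def XSK[OF c(1)] XSK[OF c(2)] using 1 xx by blast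
  next
    case 2
    then show ?thesis unfolding Qc_def XSK[OF c(1)] XSK[OF c(2)] using XYa[OF 2(1) c(2) 2(2) w] by blast
  next
    case 3
    then have "{k',k,w} \<in> E" using XYa[OF 3(2) c(1) 3(1) w] by blast
    then have "{k,k',w} \<in> E" by (metis insert_commute)
    then show ?thesis unfolding Qc_def XSK[OF c(1)] XSK[OF c(2)] using 3 by blast
  next
    case 4
    then have "k \<in> K - SX" "k' \<in> K - SX" using c by auto
    then have "k \<in> {c1,c2}" "k' \<in> {c1,c2}" using SXe(3) by simp_all
    then have eq: "{k,k'} = {c1,c2}" using c(3) by auto
    have "{k,k',w} = insert w {k,k'}" by auto
    also have "\<dots> = insert w {c1,c2}" using eq by simp
    also have "\<dots> = {c1,c2,w}" by auto
    finally have "{k,k',w} = {c1,c2,w}" .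
    then have "{k,k',w} \<in> E \<longleftrightarrow> w \<in> X" using eC by simp
    then show ?thesis unfolding Qc_def XSK[OF c(1)] XSK[OF c(2)] using 4 xx by (simp, blast)
  qed
qed

lemma ch3:
  assumes c: "k \<in> K" "k' \<in> K" "k'' \<in> K" "k \<noteq> k'" "k \<noteq> k''" "k' \<noteq> k''"
  shows "Qc k k' k''"
proof -
  have "{k,k',k''} \<in> E" using Ktri[OF c] .
  moreover have "\<not> (k \<in> SX \<and> k' \<in> SX \<and> k'' \<in> SX)" using noX3[of k k' k''] c by blast
  moreover have "\<not> (k \<notin> SX \<and> k' \<notin> SX \<and> k'' \<notin> SX)" using noY3[of k k' k''] c by blast
  ultimately show ?thesis unfolding Qc_def XSK[OF c(1)] XSK[OF c(2)] XSK[OF c(3)] by blast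
qed

lemma char:
  assumes "u \<in> V" "v \<in> V" "w \<in> V" "u \<noteq> v" "u \<noteq> w" "v \<noteq> w"
  shows "Qc u v w"
proof -
  have A: "u \<in> K \<or> u \<in> V - K" "v \<in> K \<or> v \<in> V - K" "w \<in> K \<or> w \<in> V - K" using assms by auto
  show ?thesis
    using A
  proof (elim disjE)
    assume "u \<in> K" "v \<in> K" "w \<in> K" then show ?thesis using ch3 assms by blast
  next
    assume "u \<in> K" "v \<in> K" "w \<in> V - K" then show ?thesis using ch2 assms by blast
  next
    assume h: "u \<in> K" "v \<in> V - K" "w \<in> K"
    have "Qc u w v" using ch2[OF h(1) h(3) assms(5) h(2)] .
    then show ?thesis by (rule Qc_perm(2))
  next
    assume "u \<in> K" "v \<in> V - K" "w \<in> V - K" then show ?thesis using ch1 assms by blast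
  next
    assume h: "u \<in> V - K" "v \<in> K" "w \<in> K"
    have "Qc v w u" using ch2[OF h(2) h(3) assms(6) h(1)] .
    then show ?thesis using Qc_perm(1)[OF Qc_perm(2)] by blast
  next
    assume h: "u \<in> V - K" "v \<in> K" "w \<in> V - K"
    have "Qc v u w" using ch1[OF h(2) h(1) h(3) assms(5)] .
    then show ?thesis by (rule Qc_perm(1))
  next
    assume h: "u \<in> V - K" "v \<in> V - K" "w \<in> K"
    have "Qc w u v" using ch1[OF h(3) h(1) h(2) assms(4)] .
    then show ?thesis using Qc_perm(2)[OF Qc_perm(1)] by blast
  next
    assume "u \<in> V - K" "v \<in> V - K" "w \<in> V - K" then show ?thesis using ch0 assms by blast
  qed
qed

end

lemma two_of_g: assumes "finite A" "card A \<ge> 2" shows "\<exists>p q. p \<in> A \<and> q \<in> A \<and> p \<noteq> q"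
proof -
  obtain B where "B \<subseteq> A" "card B = 2" using obtain_subset_with_card_n assms by metis
  then show ?thesis using card_2_iff[of B] by blast
qed

lemma three_of_g: assumes "finite A" "card A \<ge> 3" shows "\<exists>p q r. p \<in> A \<and> q \<in> A \<and> r \<in> A \<and> p \<noteq> q \<and> p \<noteq> r \<and> q \<noteq> r"
proof -
  obtain B where "B \<subseteq> A" "card B = 3" using obtain_subset_with_card_n assms by metis
  then show ?thesis using card_3_iff[of B] by blast
qed

lemma arith_contra:
  fixes n k :: nat
  assumes n: "n = 2*k+1" "n \<ge> 9" and e2: "2 * cE = (n - 2) * (n^2 div 4)"
    and le: "4 * cE \<le> 3 * (n choose 3)"
  shows False
proof -
  have q: "n^2 div 4 = k*k + k"
  proof -
    have "n^2 = 4*(k*k+k) + 1" using n(1) by (simp add: power2_eq_square algebra_simps)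
    then show ?thesis by simp
  qed
  have c3: "3 * (n choose 3) = n * ((n-1) choose 2)" using times_binomial_minus1_eq[of 3 n] by simp
  have c2: "(n-1) choose 2 = k * (2*k-1)"
  proof -
    have "(n-1) choose 2 = (2*k) * (2*k-1) div 2" using choose_two[of "n-1"] n(1) by simp
    also have "\<dots> = k * (2*k-1)" by simp
    finally show ?thesis .
  qed
  have "2 * (4 * cE) = 4 * ((2*k-1) * (k*k+k))" using e2 q n(1) by simp
  moreover have "2 * (3 * (n choose 3)) = 2 * ((2*k+1) * (k * (2*k-1)))" using c3 c2 n(1) by simp
  ultimately have "4 * ((2*k-1) * (k*k+k)) \<le> 2 * ((2*k+1) * (k * (2*k-1)))" using le by linarith
  then have "(2*k-1) * (4*(k*k+k)) \<le> (2*k-1) * (2*((2*k+1) * k))" by (simp add: algebra_simps)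
  moreover have "2*k-1 > 0" using n by simp
  ultimately have "4*(k*k+k) \<le> 2*((2*k+1) * k)" by simp
  then have "4*k \<le> 2*k" by (simp add: algebra_simps)
  then show False using n by simp
qed

theorem lemma2p6:
  fixes V :: "'a set" and E :: "'a set set" and n :: nat
  assumes small: "\<And>(W :: 'a set) F. hypergraph3 W F \<Longrightarrow> card W = 8 \<Longrightarrow> \<not> contains_fano W F \<Longrightarrow>
                   card F \<le> 48 \<and> (card F = 48 \<longrightarrow> hg_iso W F (B_V 8) (B_E 8))"
    and n_odd: "odd n" and n_ge: "n \<ge> 9"
    and H: "hypergraph3 V E" and card_V: "card V = n"
    and card_E: "real (card E) = b n"
    and nofano: "\<not> contains_fano V E"
    and tet: "\<And>K. induces_tetrahedron V E K \<Longrightarrow>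
               hg_iso (V - K) (induced_edges E (V - K)) (B_V (n - 4)) (B_E (n - 4)) \<and>
               (\<forall>v \<in> V - K. deg_in E v K = 5)"
  shows "hg_iso V E (B_V n) (B_E n)"
proof -
  have finV: "finite V" using H unfolding hypergraph3_def by auto
  obtain k where nk: "n = 2*k+1" using n_odd oddE by blast
  have e2: "2 * card E = (n - 2) * (n^2 div 4)"
  proof -
    have "real (2 * card E) = (real n - 2) * real (n^2 div 4)" using card_E unfolding b_def by simp
    also have "\<dots> = real ((n - 2) * (n^2 div 4))" using n_ge by (simp add: of_nat_diff)
    finally show ?thesis by (simp only: of_nat_eq_iff)
  qed
  obtain K where Kt: "induces_tetrahedron V E K"
  proof (rule ccontr)
    assume "\<not> thesis"
    then have "\<And>K. \<not> induces_tetrahedron V E K" using that by blast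
    then have "4 * card E \<le> 3 * (n choose 3)" using count_tet[OF H card_V] n_ge by simp
    then show False using arith_contra[OF nk n_ge e2] by simp
  qed
  have iso: "hg_iso (V - K) (induced_edges E (V - K)) (B_V (n - 4)) (B_E (n - 4))"
    and deg: "\<forall>v \<in> V - K. deg_in E v K = 5" using tet[OF Kt] by auto
  have KV: "K \<subseteq> V" and cK: "card K = 4" using Kt unfolding induces_tetrahedron_def by auto
  define m where "m = n - 4"
  define h where "h = m div 2"
  have k4: "k \<ge> 4" using nk n_ge by simp
  have mval: "m = 2*(k-2)+1" unfolding m_def using nk k4 by simp
  have hval: "h = k-2" unfolding h_def mval by simp
  have mh: "m = 2*h+1" "h \<ge> 2" using mval hval k4 by simp_all
  from iso obtain f where fb: "bij_betw f (V - K) {0..<m}"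
    and fe0: "\<forall>e. e \<subseteq> V - K \<longrightarrow> (f ` e \<in> B_E m \<longleftrightarrow> e \<in> induced_edges E (V - K))"
    unfolding hg_iso_def B_V_def m_def by blast
  have fe: "\<And>e. e \<subseteq> V - K \<Longrightarrow> (f ` e \<in> B_E m \<longleftrightarrow> e \<in> induced_edges E (V - K))"
    using fe0 by blast
  define X where "X = {v \<in> V - K. f v < h}"
  define Y where "Y = {v \<in> V - K. h \<le> f v}"
  have XY: "X \<union> Y = V - K" "X \<inter> Y = {}" unfolding X_def Y_def by auto
  have finVK: "finite (V - K)" using finV by simp
  have injf: "inj_on f (V - K)" using fb by (simp_all add: bij_betw_imp_inj_on bij_betw_imp_surj_on)
  have fim: "f ` (V - K) = {0..<m}" using fb by (simp_all add: bij_betw_imp_inj_on bij_betw_imp_surj_on)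
  have fX: "f ` X = {0..<h}"
  proof
    show "f ` X \<subseteq> {0..<h}" unfolding X_def by auto
    show "{0..<h} \<subseteq> f ` X"
    proof
      fix i assume "i \<in> {0..<h}"
      then have "i \<in> f ` (V - K)" using fim mh by auto
      then obtain v where "v \<in> V - K" "f v = i" by auto
      then show "i \<in> f ` X" using \<open>i \<in> {0..<h}\<close> unfolding X_def by auto
    qed
  qed
  have fY: "f ` Y = {h..<m}"
  proof
    show "f ` Y \<subseteq> {h..<m}" unfolding Y_def using fim by auto
    show "{h..<m} \<subseteq> f ` Y"
    proof
      fix i assume "i \<in> {h..<m}"
      then have "i \<in> f ` (V - K)" using fim by auto
      then obtain v where "v \<in> V - K" "f v = i" by auto
      then show "i \<in> f ` Y" using \<open>i \<in> {h..<m}\<close> unfolding Y_def by auto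
    qed
  qed
  have cX: "card X = h" using card_image[OF inj_on_subset[OF injf]] fX XY by (metis Un_upper1 card_atLeastLessThan diff_zero)
  have cY: "card Y = h + 1"
  proof -
    have "Y \<subseteq> V - K" using XY by blast
    then have "card Y = card {h..<m}" using card_image[OF inj_on_subset[OF injf, of Y]] fY by simp
    then show ?thesis using mh by simp
  qed
  have F2: "\<And>u v w. u \<in> V - K \<Longrightarrow> v \<in> V - K \<Longrightarrow> w \<in> V - K \<Longrightarrow> u \<noteq> v \<Longrightarrow> u \<noteq> w \<Longrightarrow> v \<noteq> w \<Longrightarrow>
         ({u,v,w} \<in> E \<longleftrightarrow> \<not>(u \<in> X \<and> v \<in> X \<and> w \<in> X) \<and> \<not>(u \<in> Y \<and> v \<in> Y \<and> w \<in> Y))"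
  proof -
    fix u v w assume a: "u \<in> V - K" "v \<in> V - K" "w \<in> V - K" "u \<noteq> v" "u \<noteq> w" "v \<noteq> w"
    have sub: "{u,v,w} \<subseteq> V - K" using a by auto
    have d: "f u \<noteq> f v" "f u \<noteq> f w" "f v \<noteq> f w" using a injf by (auto dest: inj_onD)
    have r: "f u < m" "f v < m" "f w < m" using a fim by auto
    have "{u,v,w} \<in> E \<longleftrightarrow> f ` {u,v,w} \<in> B_E m" using fe[OF sub] sub unfolding induced_edges_def by auto
    also have "\<dots> \<longleftrightarrow> ({f u, f v, f w} \<inter> {0..<m div 2} \<noteq> {} \<and> {f u, f v, f w} \<inter> {m div 2..<m} \<noteq> {})"
      unfolding B_E_def using d r by auto
    also have "\<dots> \<longleftrightarrow> \<not>(u \<in> X \<and> v \<in> X \<and> w \<in> X) \<and> \<not>(u \<in> Y \<and> v \<in> Y \<and> w \<in> Y)"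
      unfolding X_def Y_def h_def[symmetric] using a r by auto
    finally show "({u,v,w} \<in> E \<longleftrightarrow> \<not>(u \<in> X \<and> v \<in> X \<and> w \<in> X) \<and> \<not>(u \<in> Y \<and> v \<in> Y \<and> w \<in> Y))" .
  qed
  have TET: "\<And>T v. induces_tetrahedron V E T \<Longrightarrow> v \<in> V - T \<Longrightarrow> deg_in E v T = 5"
    using tet by blast
  have finX: "finite X" "finite Y" using finVK XY by (metis finite_Un)+
  obtain x1 x2 where xx: "x1 \<in> X" "x2 \<in> X" "x1 \<noteq> x2" using two_of_g[OF finX(1)] cX mh by auto
  obtain y1 y2 y3 where yy: "y1 \<in> Y" "y2 \<in> Y" "y3 \<in> Y" "y1 \<noteq> y2" "y1 \<noteq> y3" "y2 \<noteq> y3"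
    using three_of_g[OF finX(2)] cY mh by auto
  have Sax: "setting V E K X Y x1 x2 y1 y2 y3"
    by (rule setting.intro[OF H Kt XY(1) XY(2) F2 TET xx yy])
  interpret S: setting V E K X Y x1 x2 y1 y2 y3 by (rule Sax)
  obtain a1 a2 where A: "S.SX = {a1,a2}" "a1 \<noteq> a2" using card_2_iff[THEN iffD1, OF S.cardSX(1)] by blast
  obtain c1 c2 where C: "K - S.SX = {c1,c2}" "c1 \<noteq> c2" using card_2_iff[THEN iffD1, OF S.cardSX(2)] by blast
  have S2ax: "setting2 V E K X Y x1 x2 y1 y2 y3 a1 a2 c1 c2"
    by (rule setting2.intro[OF Sax setting2_axioms.intro[OF A(1) A(2) C(1) C(2)]])
  interpret S2: setting2 V E K X Y x1 x2 y1 y2 y3 a1 a2 c1 c2 by (rule S2ax)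
  define XS where "XS = S2.XS"
  have XSsub: "XS \<subseteq> V" unfolding XS_def S2.XS_def using XY S.SXK KV by auto
  have cXS: "card XS = n div 2"
  proof -
    have "X \<inter> S.SX = {}" using XY S.SXK by auto
    moreover have "finite S.SX" using A by simp
    ultimately have "card XS = card X + card S.SX" unfolding XS_def S2.XS_def using finX card_Un_disjoint by blast
    then show ?thesis using cX A mh nk unfolding m_def by simp
  qed
  have finXS: "finite XS" using XSsub finV finite_subset by blast
  have cR: "card (V - XS) = n - n div 2" using card_Diff_subset[OF finXS XSsub] cXS card_V by simp
  obtain g1 where g1: "bij_betw g1 XS {0..<n div 2}" using finite_same_card_bij[OF finXS, of "{0..<n div 2}"] cXS by auto
  obtain g2 where g2: "bij_betw g2 (V - XS) {n div 2..<n}"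
    using finite_same_card_bij[of "V - XS" "{n div 2..<n}"] cR finV by auto
  define g where "g v = (if v \<in> XS then g1 v else g2 v)" for v
  have gb1: "bij_betw g XS {0..<n div 2}" using g1 by (rule bij_betw_cong[THEN iffD1, rotated]) (auto simp: g_def)
  have gb2: "bij_betw g (V - XS) {n div 2..<n}" using g2 by (rule bij_betw_cong[THEN iffD1, rotated]) (auto simp: g_def)
  have gb: "bij_betw g V {0..<n}"
  proof -
    have "bij_betw g (XS \<union> (V - XS)) ({0..<n div 2} \<union> {n div 2..<n})"
      by (rule bij_betw_combine[OF gb1 gb2]) auto
    moreover have "XS \<union> (V - XS) = V" using XSsub by auto
    moreover have "{0..<n div 2} \<union> {n div 2..<n} = {0..<n}" by auto
    ultimately show ?thesis by simp
  qed
  have ginj: "inj_on g V" using gb by (simp add: bij_betw_imp_inj_on)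
  have gsm: "v \<in> V \<Longrightarrow> (g v < n div 2 \<longleftrightarrow> v \<in> XS)" for v
  proof -
    assume v: "v \<in> V"
    show ?thesis
    proof (cases "v \<in> XS")
      case True then show ?thesis using gb1 unfolding bij_betw_def by auto
    next
      case False then have "g v \<in> {n div 2..<n}" using gb2 v unfolding bij_betw_def by auto
      then show ?thesis using False by auto
    qed
  qed
  have glt: "v \<in> V \<Longrightarrow> g v < n" for v using gb unfolding bij_betw_def by auto
  show ?thesis unfolding hg_iso_def B_V_def
  proof (intro exI conjI allI impI)
    show "bij_betw g V {0..<n}" by (rule gb)
    fix e assume eV: "e \<subseteq> V"
    have ce: "card (g ` e) = card e" using card_image[OF inj_on_subset[OF ginj eV]] .
    have gsub: "g ` e \<subseteq> {0..<n}" using glt eV by auto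
    have lowiff: "g ` e \<inter> {0..<n div 2} \<noteq> {} \<longleftrightarrow> (\<exists>z\<in>e. z \<in> XS)"
    proof
      assume "g ` e \<inter> {0..<n div 2} \<noteq> {}"
      then obtain z where "z \<in> e" "g z < n div 2" by auto
      then show "\<exists>z\<in>e. z \<in> XS" using gsm eV by blast
    next
      assume "\<exists>z\<in>e. z \<in> XS"
      then obtain z where "z \<in> e" "z \<in> XS" by blast
      then have "g z \<in> g ` e \<inter> {0..<n div 2}" using gsm eV by auto
      then show "g ` e \<inter> {0..<n div 2} \<noteq> {}" by blast
    qed
    have highiff: "g ` e \<inter> {n div 2..<n} \<noteq> {} \<longleftrightarrow> (\<exists>z\<in>e. z \<notin> XS)"
    proof
      assume "g ` e \<inter> {n div 2..<n} \<noteq> {}"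
      then obtain z where "z \<in> e" "\<not> g z < n div 2" by (auto simp: not_less)
      then show "\<exists>z\<in>e. z \<notin> XS" using gsm eV by blast
    next
      assume "\<exists>z\<in>e. z \<notin> XS"
      then obtain z where z: "z \<in> e" "z \<notin> XS" by blast
      then have "\<not> g z < n div 2" "g z < n" using gsm glt eV by auto
      then have "g z \<in> g ` e \<inter> {n div 2..<n}" using z by auto
      then show "g ` e \<inter> {n div 2..<n} \<noteq> {}" by blast
    qed
    have BE: "g ` e \<in> B_E n \<longleftrightarrow> card e = 3 \<and> (\<exists>z\<in>e. z \<in> XS) \<and> (\<exists>z\<in>e. z \<notin> XS)"
      unfolding B_E_def using gsub ce lowiff highiff by simp
    show "g ` e \<in> B_E n \<longleftrightarrow> e \<in> E"
    proof (cases "card e = 3")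
      case False
      have "g ` e \<notin> B_E n" using BE False by simp
      moreover have "e \<notin> E" using H False unfolding hypergraph3_def by auto
      ultimately show ?thesis by simp
    next
      case True
      then obtain u v w where e: "e = {u,v,w}" "u \<noteq> v" "v \<noteq> w" "u \<noteq> w"
        using card_3_iff[THEN iffD1, OF True] by blast
      have uvw: "u \<in> V" "v \<in> V" "w \<in> V" using eV e by auto
      have Q: "S2.Qc u v w" using S2.char[OF uvw e(2) e(4) e(3)] .
      have "(\<exists>z\<in>e. z \<in> XS) \<longleftrightarrow> \<not>(u \<notin> XS \<and> v \<notin> XS \<and> w \<notin> XS)" using e(1) by blast
      moreover have "(\<exists>z\<in>e. z \<notin> XS) \<longleftrightarrow> \<not>(u \<in> XS \<and> v \<in> XS \<and> w \<in> XS)" using e(1) by blast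
      ultimately have "g ` e \<in> B_E n \<longleftrightarrow> \<not>(u \<notin> XS \<and> v \<notin> XS \<and> w \<notin> XS) \<and> \<not>(u \<in> XS \<and> v \<in> XS \<and> w \<in> XS)"
        using BE True by simp
      moreover have "e \<in> E \<longleftrightarrow> \<not>(u \<in> XS \<and> v \<in> XS \<and> w \<in> XS) \<and> \<not>(u \<notin> XS \<and> v \<notin> XS \<and> w \<notin> XS)"
        using Q unfolding e(1) S2.Qc_def XS_def by simp
      ultimately show ?thesis by blast
    qed
  qed
qed

end
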